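(* For every integer $r\ge 0$, $\mathrm{LCD}[6r+5,2] < 4r+3$.
   Context: All codes are binary linear codes, i.e. subspaces of $\mathbb{F}_2^n$; an $[n,k,d]$ code is one of length $n$, dimension $k$ and minimum Hamming distance $d$. A linear code $C$ is an LCD code if $C\cap C^\perp=\{0\}$, where $C^\perp$ is the dual with respect to the standard dot product. For positive integers $n\ge k$, $\mathrm{LCD}[n,k]$ denotes the largest $d$ such that there exists a binary $[n,k,d]$ LCD code. *)

theory Defs
  imports Main
begin

text \<open>Vectors of F_2^n are represented as bool lists of length n (True = 1, False = 0).\<close>

definition vadd :: "bool list \<Rightarrow> bool list \<Rightarrow> bool list" where
  "vadd u v = map2 (\<noteq>) u v"

definition zero_vec :: "nat \<Rightarrow> bool list" where
  "zero_vec n = replicate n False"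

definition dot :: "bool list \<Rightarrow> bool list \<Rightarrow> bool" where
  "dot u v = odd (length (filter id (map2 (\<and>) u v)))"

definition hamming_dist :: "bool list \<Rightarrow> bool list \<Rightarrow> nat" where
  "hamming_dist u v = length (filter id (map2 (\<noteq>) u v))"

text \<open>A binary linear code of length n: a subspace of F_2^n (over F_2, closure
  under addition and containing 0 is exactly being a subspace).\<close>
definition linear_code :: "nat \<Rightarrow> bool list set \<Rightarrow> bool" where
  "linear_code n C \<longleftrightarrow> C \<subseteq> {v. length v = n} \<and> zero_vec n \<in> C \<and>
     (\<forall>u\<in>C. \<forall>v\<in>C. vadd u v \<in> C)"

definition dual_code :: "nat \<Rightarrow> bool list set \<Rightarrow> bool list set" where
  "dual_code n C = {v. length v = n \<and> (\<forall>c\<in>C. \<not> dot v c)}"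

definition min_dist :: "bool list set \<Rightarrow> nat" where
  "min_dist C = Min {hamming_dist u v | u v. u \<in> C \<and> v \<in> C \<and> u \<noteq> v}"

text \<open>An [n,k,d] binary linear code. Dimension k of a binary subspace is
  expressed via its cardinality 2^k.\<close>
definition nkd_code :: "nat \<Rightarrow> nat \<Rightarrow> nat \<Rightarrow> bool list set \<Rightarrow> bool" where
  "nkd_code n k d C \<longleftrightarrow> linear_code n C \<and> card C = 2 ^ k \<and> min_dist C = d"

definition is_LCD :: "nat \<Rightarrow> bool list set \<Rightarrow> bool" where
  "is_LCD n C \<longleftrightarrow> C \<inter> dual_code n C = {zero_vec n}"

definition LCD_max :: "nat \<Rightarrow> nat \<Rightarrow> nat" where
  "LCD_max n k = (GREATEST d. \<exists>C. nkd_code n k d C \<and> is_LCD n C)"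

end

theory Submission
  imports Defs
begin

definition wt :: "bool list \<Rightarrow> nat" where "wt v = length (filter id v)"
definition ip :: "bool list \<Rightarrow> bool list \<Rightarrow> nat" where
  "ip u v = length (filter id (map2 (\<and>) u v))"

lemma dot_ip: "dot u v = odd (ip u v)" by (simp add: dot_def ip_def)

lemma ip_comm: "ip u v = ip v u"
  unfolding ip_def
proof (induction u arbitrary: v)
  case Nil then show ?case by simp
next
  case (Cons x u) then show ?case by (cases v) auto
qed

lemma dot_comm: "dot u v = dot v u" by (simp add: dot_ip ip_comm)

lemma ip_self: "ip a a = wt a"
  unfolding ip_def wt_def by (induction a) auto

lemma dot_zero: "\<not> dot v (zero_vec n)"
  unfolding dot_def zero_vec_def
proof (induction v arbitrary: n)
  case Nil then show ?case by simp
next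
  case (Cons x v) then show ?case by (cases n) auto
qed

lemma dot_vadd: "length x = length y \<Longrightarrow> dot v (vadd x y) = (dot v x \<noteq> dot v y)"
  unfolding dot_def vadd_def
proof (induction x y arbitrary: v rule: list_induct2)
  case Nil then show ?case by simp
next
  case (Cons a x b y) then show ?case by (cases v) auto
qed

lemma hd_zero: "hamming_dist a (zero_vec (length a)) = wt a"
  unfolding hamming_dist_def zero_vec_def wt_def by (induction a) auto

lemma wt_vadd: "length a = length b \<Longrightarrow> wt (vadd a b) + 2 * ip a b = wt a + wt b"
  unfolding wt_def vadd_def ip_def by (induction a b rule: list_induct2) auto

lemma or_bound: "length a = length b \<Longrightarrow> wt a + wt b \<le> length a + ip a b"
  unfolding wt_def ip_def by (induction a b rule: list_induct2) auto

lemma length_vadd: "length (vadd a b) = min (length a) (length b)"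
  by (simp add: vadd_def)

lemma vadd_zero_eq: "length a = length b \<Longrightarrow> vadd a b = zero_vec (length a) \<Longrightarrow> a = b"
  unfolding vadd_def zero_vec_def by (induction a b rule: list_induct2) auto

lemma vadd_self_eq: "length a = length b \<Longrightarrow> vadd a b = a \<Longrightarrow> b = zero_vec (length a)"
  unfolding vadd_def zero_vec_def by (induction a b rule: list_induct2) auto

lemma vadd_self_eq2: "length a = length b \<Longrightarrow> vadd a b = b \<Longrightarrow> a = zero_vec (length a)"
  unfolding vadd_def zero_vec_def by (induction a b rule: list_induct2) auto

lemma vadd_zero: "length a = n \<Longrightarrow> vadd a (zero_vec n) = a"
  unfolding vadd_def zero_vec_def by (induction a arbitrary: n) auto

lemma vadd_zero2: "length a = n \<Longrightarrow> vadd (zero_vec n) a = a"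
  unfolding vadd_def zero_vec_def by (induction a arbitrary: n) auto

lemma vadd_same: "vadd a a = zero_vec (length a)"
  unfolding vadd_def zero_vec_def by (induction a) auto

lemma vadd_comm: "vadd a b = vadd b a"
  unfolding vadd_def
proof (induction a arbitrary: b)
  case Nil then show ?case by simp
next
  case (Cons x u) then show ?case by (cases b) auto
qed

lemma vadd_cancel: "length a = length b \<Longrightarrow> vadd (vadd a b) b = a"
  unfolding vadd_def by (induction a b rule: list_induct2) auto

lemma vadd_cancel2: "length a = length b \<Longrightarrow> vadd (vadd a b) a = b"
  unfolding vadd_def by (induction a b rule: list_induct2) auto


lemma arith_core: "\<lbrakk>odd (wa::nat) \<or> odd ab; odd ab \<or> odd wb; (odd wa \<noteq> odd ab) \<or> (odd ab \<noteq> odd wb);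
  wab + 2*ab = wa + wb; wa + wb \<le> 6*r+5 + ab; d \<le> wa; d \<le> wb; d \<le> wab\<rbrakk> \<Longrightarrow> d \<le> 4*r+2"
proof (rule ccontr)
  assume h: "odd (wa::nat) \<or> odd ab" "odd ab \<or> odd wb" "(odd wa \<noteq> odd ab) \<or> (odd ab \<noteq> odd wb)"
    "wab + 2*ab = wa + wb" "wa + wb \<le> 6*r+5 + ab" "d \<le> wa" "d \<le> wb" "d \<le> wab" "\<not> d \<le> 4*r+2"
  have e: "wa + wb = 6*r+5+ab" using h(4-9) by linarith
  have "4*r+3 \<le> wa" "4*r+3 \<le> wb" using h(6,7,9) by linarith+
  then obtain i j where ij: "wa = 4*r+3+i" "wb = 4*r+3+j"
    by (metis le_add_diff_inverse)
  have ab: "ab = 2*r+1+i+j" using e ij by linarith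
  have "i + j \<le> 1" using h(4,8,9) ij ab by linarith
  then have "(i = 0 \<and> j = 0) \<or> (i = 1 \<and> j = 0) \<or> (i = 0 \<and> j = 1)" by linarith
  then show False using h(1-3) ij ab by auto
qed

locale two_gen =
  fixes n :: nat and a b :: "bool list"
  assumes la: "length a = n" and lb: "length b = n"
    and a0: "a \<noteq> zero_vec n" and b0: "b \<noteq> zero_vec n" and ab: "a \<noteq> b"
begin

definition CC where "CC = {zero_vec n, a, b, vadd a b}"

lemma lab: "length (vadd a b) = n" using la lb by (simp add: length_vadd)

lemma distinct4: "vadd a b \<noteq> zero_vec n" "vadd a b \<noteq> a" "vadd a b \<noteq> b"
  using vadd_zero_eq[of a b] vadd_self_eq[of a b] vadd_self_eq2[of a b] la lb a0 b0 ab by auto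

lemma lin: "linear_code n CC"
proof -
  have lz: "length (zero_vec n) = n" by (simp add: zero_vec_def)
  have s: "vadd a (vadd a b) = b" "vadd b (vadd a b) = a" "vadd (vadd a b) a = b" "vadd (vadd a b) b = a"
    using vadd_cancel[of a b] vadd_cancel2[of a b] la lb vadd_comm by metis+
  show ?thesis unfolding linear_code_def CC_def
    using la lb lab lz s vadd_same[of a] vadd_same[of b] vadd_same[of "vadd a b"]
      vadd_same[of "zero_vec n"] vadd_zero[of a n] vadd_zero[of b n] vadd_zero[of "vadd a b" n]
      vadd_zero2[of a n] vadd_zero2[of b n] vadd_zero2[of "vadd a b" n] vadd_comm[of a b]
    by auto
qed

lemma card4: "card CC = 4"
  unfolding CC_def using distinct4 a0 b0 ab by (simp add: card_insert_if)

lemma dual_iff: "v \<in> dual_code n CC \<longleftrightarrow> length v = n \<and> \<not> dot v a \<and> \<not> dot v b"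
proof -
  have dv: "dot v (vadd a b) = (dot v a \<noteq> dot v b)" using dot_vadd la lb by simp
  show ?thesis unfolding dual_code_def CC_def by (auto simp: dot_zero dv)
qed

lemma md: "min_dist CC \<le> wt a" "min_dist CC \<le> wt b" "min_dist CC \<le> wt (vadd a b)"
proof -
  let ?S = "{hamming_dist u v | u v. u \<in> CC \<and> v \<in> CC \<and> u \<noteq> v}"
  have "?S \<subseteq> (\<lambda>(u,v). hamming_dist u v) ` (CC \<times> CC)" by auto
  moreover have "finite CC" unfolding CC_def by simp
  ultimately have fin: "finite ?S" by (meson finite_SigmaI finite_imageI finite_subset)
  have m: "min_dist CC = Min ?S" unfolding min_dist_def by simp
  have "hamming_dist a (zero_vec n) \<in> ?S" unfolding CC_def using a0 by blast
  then have "Min ?S \<le> hamming_dist a (zero_vec n)" by (rule Min_le[OF fin])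
  then show "min_dist CC \<le> wt a" using m hd_zero[of a] la by simp
  have "hamming_dist b (zero_vec n) \<in> ?S" unfolding CC_def using b0 by blast
  then have "Min ?S \<le> hamming_dist b (zero_vec n)" by (rule Min_le[OF fin])
  then show "min_dist CC \<le> wt b" using m hd_zero[of b] lb by simp
  have "hamming_dist a b \<in> ?S" unfolding CC_def using ab by blast
  then have "Min ?S \<le> hamming_dist a b" by (rule Min_le[OF fin])
  then show "min_dist CC \<le> wt (vadd a b)" using m by (simp add: hamming_dist_def vadd_def wt_def)
qed

end

lemma bound:
  assumes "nkd_code (6*r+5) 2 d C" "is_LCD (6*r+5) C"
  shows "d \<le> 4*r+2"
proof -
  define n where "n = 6*r+5"
  have lin: "linear_code n C" and c4: "card C = 4" and dd: "min_dist C = d"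
    using assms(1) unfolding nkd_code_def n_def by auto
  have lcd: "C \<inter> dual_code n C = {zero_vec n}" using assms(2) unfolding is_LCD_def n_def by auto
  have fin: "finite C" using c4 by (metis card.infinite zero_neq_numeral)
  have z: "zero_vec n \<in> C" and sub: "C \<subseteq> {v. length v = n}"
    and cl: "\<And>u v. u \<in> C \<Longrightarrow> v \<in> C \<Longrightarrow> vadd u v \<in> C"
    using lin unfolding linear_code_def by auto
  have "card (C - {zero_vec n}) = 3" using c4 z fin by simp
  then obtain a where a: "a \<in> C" "a \<noteq> zero_vec n"
    by (metis Diff_iff card.empty ex_in_conv insert_iff zero_neq_numeral)
  have "card (C - {zero_vec n, a}) = 2" using c4 z fin a by (simp add: card_Diff_subset)
  then obtain b where b: "b \<in> C" "b \<noteq> zero_vec n" "b \<noteq> a"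
    by (metis Diff_iff card.empty ex_in_conv insert_iff zero_neq_numeral)
  have la: "length a = n" and lb: "length b = n" using a b sub by auto
  interpret two_gen n a b using la lb a b by unfold_locales auto
  have "CC \<subseteq> C" unfolding CC_def using z a b cl by auto
  then have CCe: "CC = C" using card4 c4 fin by (metis card_subset_eq)
  have nd: "\<And>v. v \<in> C \<Longrightarrow> v \<noteq> zero_vec n \<Longrightarrow> v \<notin> dual_code n C" using lcd by auto
  have c1: "dot a a \<or> dot a b" using nd[OF a] dual_iff CCe la by auto
  have c2: "dot b a \<or> dot b b" using nd[OF b(1,2)] dual_iff CCe lb by auto
  have c3: "dot (vadd a b) a \<or> dot (vadd a b) b" using nd[OF cl[OF a(1) b(1)] distinct4(1)] dual_iff CCe lab by auto
  have e3: "dot (vadd a b) a = (dot a a \<noteq> dot b a)" "dot (vadd a b) b = (dot a b \<noteq> dot b b)"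
    using dot_comm dot_vadd[of a b] la lb by metis+
  have P: "odd (wt a) \<or> odd (ip a b)" "odd (ip a b) \<or> odd (wt b)"
    "(odd (wt a) \<noteq> odd (ip a b)) \<or> (odd (ip a b) \<noteq> odd (wt b))"
    using c1 c2 c3 e3 unfolding dot_ip using ip_self ip_comm by metis+
  have W: "wt (vadd a b) + 2 * ip a b = wt a + wt b" using wt_vadd la lb by simp
  have O: "wt a + wt b \<le> n + ip a b" using or_bound[of a b] la lb by simp
  have D: "d \<le> wt a" "d \<le> wt b" "d \<le> wt (vadd a b)" using md CCe dd by auto
  show ?thesis using arith_core[OF P W O[unfolded n_def] D] .
qed

theorem proposition2p5:
  fixes r :: nat
  shows "LCD_max (6 * r + 5) 2 < 4 * r + 3"
proof -
  define n where "n = 6*r+5"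
  define a where "a = True # False # replicate (n-2) False"
  define b where "b = False # True # replicate (n-2) False"
  have la: "length a = n" and lb: "length b = n" unfolding a_def b_def n_def by auto
  have zv: "zero_vec n = False # False # replicate (n-2) False"
    unfolding zero_vec_def n_def by (simp add: numeral_eq_Suc)
  have a0: "a \<noteq> zero_vec n" "b \<noteq> zero_vec n" "a \<noteq> b"
    unfolding a_def b_def zv by auto
  interpret two_gen n a b using la lb a0 by unfold_locales
  have daa: "dot a a" and dbb: "dot b b" and dab: "\<not> dot a b"
    unfolding a_def b_def dot_def by (simp_all add: zip_replicate)
  have dba: "\<not> dot b a" using dab dot_comm by metis
  have dsa: "dot (vadd a b) a" using dot_comm[of "vadd a b" a] dot_vadd[of a b a] la lb daa dab by simp
  have "is_LCD n CC"
    unfolding is_LCD_def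
  proof
    show "CC \<inter> dual_code n CC \<subseteq> {zero_vec n}"
    proof
      fix v assume v: "v \<in> CC \<inter> dual_code n CC"
      then have "v \<in> CC" and nd: "\<not> dot v a" and nd2: "\<not> dot v b" by (auto simp: dual_iff)
      then have "v = zero_vec n \<or> v = a \<or> v = b \<or> v = vadd a b" unfolding CC_def by blast
      moreover have "v \<noteq> a" using nd daa by blast
      moreover have "v \<noteq> b" using nd2 dbb by blast
      moreover have "v \<noteq> vadd a b" using nd dsa by blast
      ultimately show "v \<in> {zero_vec n}" by blast
    qed
    have "zero_vec n \<in> dual_code n CC"
      using dual_iff dot_zero dot_comm by (metis length_replicate zero_vec_def)
    then show "{zero_vec n} \<subseteq> CC \<inter> dual_code n CC"
      unfolding CC_def by blast
  qed
  then have P: "\<exists>C. nkd_code n 2 (min_dist CC) C \<and> is_LCD n C"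
    using lin card4 unfolding nkd_code_def by auto
  have Q: "\<And>y. (\<exists>C. nkd_code n 2 y C \<and> is_LCD n C) \<Longrightarrow> y \<le> 4*r+2"
    using bound unfolding n_def by blast
  have "\<exists>C. nkd_code n 2 (LCD_max n 2) C \<and> is_LCD n C"
    unfolding LCD_max_def
    by (rule GreatestI_nat[where P="\<lambda>d. \<exists>C. nkd_code n 2 d C \<and> is_LCD n C", OF P Q])
  then have "LCD_max n 2 \<le> 4*r+2" using Q by blast
  then show ?thesis unfolding n_def by simp
qed

end
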